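(* Let $K=\{k_0,k_1,\dots,k_n\}$ be a finite set of social alternatives and $K_*=K\setminus\{k_0\}$. Let $T_1,T_2$ be finite type sets with $\min\{|T_1|,|T_2|\}=2$, let $T=T_1\times T_2$, and let $\lambda$ be a probability measure on $T$ with $\lambda(t)>0$ for all $t\in T$ which is the product of its marginals $\lambda_1$ on $T_1$ and $\lambda_2$ on $T_2$. Let $Q=(Q_1,Q_2)$ with $Q_i:K\times T_i\to\mathbb{R}$ be an interim allocation rule satisfying $\sum_{k\in K}Q_i^k(t_i)=1$ for all $t_i\in T_i$, $i=1,2$ (i.e. $Q_i^{k_0}(t_i)=1-\sum_{k\in K_*}Q_i^k(t_i)$). Then $Q$ is implementable if and only if the following three conditions hold: (a) $\sum_{t_1\in T_1}Q_1^k(t_1)\lambda_1(t_1)-\sum_{t_2\in T_2}Q_2^k(t_2)\lambda_2(t_2)=0$ for all $k\in K_*$; (b) $Q_i^k(t_i)\ge 0$ for all $k\in K_*$, $t_i\in T_i$, $i=1,2$; (c) for all $G\subseteq K_*$, $E_1\subseteq T_1$ and $E_2\subseteq T_2$, $$\sum_{k\in G}\Big[\sum_{t_1\in E_1}Q_1^k(t_1)\lambda_1(t_1)-\sum_{t_2\in E_2}Q_2^k(t_2)\lambda_2(t_2)\Big]\le \lambda\big(E_1\times (T_2\setminus E_2)\big).$$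
   Context: An ex post allocation rule $q:K\times T\to\mathbb{R}$ is feasible if $q\ge 0$ and $\sum_{k\in K}q^k(t)=1$ for all $t\in T$. An interim allocation rule $Q=(Q_1,Q_2)$, $Q_i:K\times T_i\to\mathbb{R}$, is implementable if there exists a feasible ex post allocation rule $q$ with $Q_i^k(t_i)=\sum_{t_{-i}\in T_{-i}}q^k(t)\lambda_{-i}(t_{-i})$ for all $i\in\{1,2\}$, $t_i\in T_i$, $k\in K$ (where $-i$ denotes the other player and $t=(t_i,t_{-i})$). For $E\subseteq T$, $\lambda(E)=\sum_{t\in E}\lambda(t)$. *)

theory Defs
  imports Complex_Main
begin

definition marg1 :: "'b set \<Rightarrow> ('a \<times> 'b \<Rightarrow> real) \<Rightarrow> 'a \<Rightarrow> real" where
  "marg1 T2 lam t1 = (\<Sum>t2\<in>T2. lam (t1, t2))"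

definition marg2 :: "'a set \<Rightarrow> ('a \<times> 'b \<Rightarrow> real) \<Rightarrow> 'b \<Rightarrow> real" where
  "marg2 T1 lam t2 = (\<Sum>t1\<in>T1. lam (t1, t2))"

definition feasible_ex_post ::
  "'k set \<Rightarrow> 'a set \<Rightarrow> 'b set \<Rightarrow> ('k \<Rightarrow> 'a \<times> 'b \<Rightarrow> real) \<Rightarrow> bool" where
  "feasible_ex_post K T1 T2 q \<longleftrightarrow>
     (\<forall>t\<in>T1 \<times> T2. \<forall>k\<in>K. q k t \<ge> 0) \<and> (\<forall>t\<in>T1 \<times> T2. (\<Sum>k\<in>K. q k t) = 1)"

definition implementable ::
  "'k set \<Rightarrow> 'a set \<Rightarrow> 'b set \<Rightarrow> ('a \<times> 'b \<Rightarrow> real) \<Rightarrow>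
   ('k \<Rightarrow> 'a \<Rightarrow> real) \<Rightarrow> ('k \<Rightarrow> 'b \<Rightarrow> real) \<Rightarrow> bool" where
  "implementable K T1 T2 lam Q1 Q2 \<longleftrightarrow>
     (\<exists>q. feasible_ex_post K T1 T2 q \<and>
        (\<forall>k\<in>K. \<forall>t1\<in>T1. Q1 k t1 = (\<Sum>t2\<in>T2. q k (t1, t2) * marg2 T1 lam t2)) \<and>
        (\<forall>k\<in>K. \<forall>t2\<in>T2. Q2 k t2 = (\<Sum>t1\<in>T1. q k (t1, t2) * marg1 T2 lam t1)))"

end

theory Submission
  imports Defs
begin


definition gcond :: "'r set \<Rightarrow> 'c set \<Rightarrow> ('r \<Rightarrow> real) \<Rightarrow> ('c \<Rightarrow> real) \<Rightarrow> ('r \<Rightarrow> 'c \<Rightarrow> real) \<Rightarrow> bool" where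
  "gcond R C s d U \<longleftrightarrow> (\<forall>r\<in>R. 0 \<le> s r) \<and> (\<forall>c\<in>C. 0 \<le> d c) \<and> (\<forall>r\<in>R. \<forall>c\<in>C. 0 \<le> U r c)
     \<and> sum s R = sum d C \<and> (\<forall>G. G \<subseteq> C \<longrightarrow> sum d G \<le> (\<Sum>r\<in>R. min (s r) (sum (U r) G)))"

definition gsol :: "'r set \<Rightarrow> 'c set \<Rightarrow> ('r \<Rightarrow> real) \<Rightarrow> ('c \<Rightarrow> real) \<Rightarrow> ('r \<Rightarrow> 'c \<Rightarrow> real) \<Rightarrow> ('r \<Rightarrow> 'c \<Rightarrow> real) \<Rightarrow> bool" where
  "gsol R C s d U f \<longleftrightarrow> (\<forall>r\<in>R. \<forall>c\<in>C. 0 \<le> f r c \<and> f r c \<le> U r c)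
     \<and> (\<forall>r\<in>R. (\<Sum>c\<in>C. f r c) = s r) \<and> (\<forall>c\<in>C. (\<Sum>r\<in>R. f r c) = d c)"

lemma gcond_zero_col:
  assumes "finite C" "gcond R C s d U" "c \<in> C" "d c = 0"
  shows "gcond R (C-{c}) s d U"
  using assms unfolding gcond_def by (auto simp: sum_diff1)

lemma gsol_zero_col:
  assumes "finite C" "gsol R (C-{c}) s d U f" "c \<in> C" "d c = 0" "\<forall>r\<in>R. 0 \<le> U r c"
  shows "gsol R C s d U (\<lambda>r c'. if c' = c then 0 else f r c')"
proof -
  have "(\<Sum>c'\<in>C. if c' = c then 0 else f r c') = (\<Sum>c'\<in>C-{c}. f r c')" for r
    using assms(1,3) by (simp add: sum.remove[of C c] )
  moreover have "(\<Sum>r\<in>R. if c' = c then 0 else f r c') = d c'" if "c' \<in> C" for c'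
  proof (cases "c' = c")
    case True then show ?thesis using assms by simp
  next
    case False then show ?thesis using assms that unfolding gsol_def by auto
  qed
  ultimately show ?thesis using assms unfolding gsol_def by auto
qed

lemma min_aux: "0 \<le> (a::real) \<Longrightarrow> min s (a+b) - min s b \<le> min (s - min s b) a"
  by (auto simp: min_def)

lemma gcond_split1:
  assumes "finite C" "gcond R C s d U" "G \<subseteq> C"
    and tight: "sum d G = (\<Sum>r\<in>R. min (s r) (sum (U r) G))"
  shows "gcond R G (\<lambda>r. min (s r) (sum (U r) G)) d U"
proof -
  have fG: "finite G" using assms finite_subset by blast
  have U0: "\<forall>r\<in>R. \<forall>c\<in>C. 0 \<le> U r c" using assms(2) unfolding gcond_def by blast
  have "min (min (s r) (sum (U r) G)) (sum (U r) H) = min (s r) (sum (U r) H)"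
    if "H \<subseteq> G" "r \<in> R" for H r
  proof -
    have "sum (U r) H \<le> sum (U r) G"
      using that U0 assms(3) fG by (intro sum_mono2) auto
    then show ?thesis by (auto simp: min_def)
  qed
  then show ?thesis using assms unfolding gcond_def
    apply (simp add: tight)
    apply (intro conjI)
      apply (auto intro!: sum_nonneg)
    done
qed

lemma gcond_split2:
  assumes "finite R" "finite C" "gcond R C s d U" "G \<subseteq> C"
    and tight: "sum d G = (\<Sum>r\<in>R. min (s r) (sum (U r) G))"
  shows "gcond R (C-G) (\<lambda>r. s r - min (s r) (sum (U r) G)) d U"
proof -
  have fG: "finite G" using assms finite_subset by blast
  have U0: "\<forall>r\<in>R. \<forall>c\<in>C. 0 \<le> U r c" and s0: "\<forall>r\<in>R. 0 \<le> s r" and d0: "\<forall>c\<in>C. 0 \<le> d c"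
    and ss: "sum s R = sum d C" and cut: "\<forall>G. G \<subseteq> C \<longrightarrow> sum d G \<le> (\<Sum>r\<in>R. min (s r) (sum (U r) G))"
    using assms(3) unfolding gcond_def by blast+
  have sum2: "(\<Sum>r\<in>R. s r - min (s r) (sum (U r) G)) = sum d (C - G)"
    using ss tight assms(2,4) by (simp add: sum_subtractf sum_diff)
  have cut2: "sum d H \<le> (\<Sum>r\<in>R. min (s r - min (s r) (sum (U r) G)) (sum (U r) H))"
    if H: "H \<subseteq> C - G" for H
  proof -
    have fH: "finite H" using H assms(2) finite_subset by blast
    have dis: "H \<inter> G = {}" using H by blast
    have "sum d (H \<union> G) \<le> (\<Sum>r\<in>R. min (s r) (sum (U r) (H \<union> G)))"
    proof -
      have "H \<union> G \<subseteq> C" using H assms(4) by auto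
      then show ?thesis using cut by blast
    qed
    also have "\<dots> = (\<Sum>r\<in>R. min (s r) (sum (U r) H + sum (U r) G))"
      using fH fG dis by (simp add: sum.union_disjoint)
    finally have "sum d H + sum d G \<le> (\<Sum>r\<in>R. min (s r) (sum (U r) H + sum (U r) G))"
      using fH fG dis by (simp add: sum.union_disjoint)
    then have "sum d H \<le> (\<Sum>r\<in>R. min (s r) (sum (U r) H + sum (U r) G) - min (s r) (sum (U r) G))"
      using tight by (simp add: sum_subtractf)
    also have "\<dots> \<le> (\<Sum>r\<in>R. min (s r - min (s r) (sum (U r) G)) (sum (U r) H))"
    proof (rule sum_mono)
      fix r assume r: "r \<in> R"
      have "0 \<le> sum (U r) H" using U0 r H by (intro sum_nonneg) auto
      then show "min (s r) (sum (U r) H + sum (U r) G) - min (s r) (sum (U r) G)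
         \<le> min (s r - min (s r) (sum (U r) G)) (sum (U r) H)" by (rule min_aux)
    qed
    finally show ?thesis .
  qed
  show ?thesis unfolding gcond_def
    using s0 d0 U0 sum2 cut2 by auto
qed

lemma gsol_split:
  assumes "finite C" "G \<subseteq> C" "gsol R G s1 d U f1" "gsol R (C-G) s2 d U f2"
    and "\<forall>r\<in>R. s r = s1 r + s2 r"
  shows "gsol R C s d U (\<lambda>r c. if c \<in> G then f1 r c else f2 r c)"
proof -
  have e1: "C \<inter> {x. x \<in> G} = G" "C \<inter> - {x. x \<in> G} = C - G" "C \<inter> G = G" "C \<inter> - G = C - G" using assms(2) by auto
  have "(\<Sum>c\<in>C. if c \<in> G then f1 r c else f2 r c) = (\<Sum>c\<in>G. f1 r c) + (\<Sum>c\<in>C-G. f2 r c)" for r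
    using assms(1) by (simp add: sum.If_cases e1)
  moreover have "(\<Sum>r\<in>R. if c \<in> G then f1 r c else f2 r c) = d c" if "c \<in> C" for c
    using assms that unfolding gsol_def by (cases "c \<in> G") auto
  ultimately show ?thesis using assms unfolding gsol_def by auto
qed

lemma gsol_convex:
  assumes "gsol R C s d1 U f1" "gsol R C s d2 U f2" "0 \<le> \<alpha>" "\<alpha> \<le> 1"
    and "\<forall>c\<in>C. d c = \<alpha> * d1 c + (1-\<alpha>) * d2 c"
  shows "gsol R C s d U (\<lambda>r c. \<alpha> * f1 r c + (1-\<alpha>) * f2 r c)"
proof -
  have b: "0 \<le> \<alpha> * f1 r c + (1-\<alpha>) * f2 r c \<and> \<alpha> * f1 r c + (1-\<alpha>) * f2 r c \<le> U r c"
    if "r \<in> R" "c \<in> C" for r c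
  proof -
    have "0 \<le> f1 r c" "f1 r c \<le> U r c" "0 \<le> f2 r c" "f2 r c \<le> U r c"
      using assms(1,2) that unfolding gsol_def by auto
    moreover have "\<alpha> * f1 r c \<le> \<alpha> * U r c" using calculation assms(3) by (intro mult_left_mono)
    moreover have "(1-\<alpha>) * f2 r c \<le> (1-\<alpha>) * U r c" using calculation assms(4) by (intro mult_left_mono) auto
    moreover have "0 \<le> \<alpha> * f1 r c" "0 \<le> (1-\<alpha>) * f2 r c" using calculation assms(3,4) by auto
    ultimately show ?thesis by (auto simp: algebra_simps)
  qed
  have rs: "(\<Sum>c\<in>C. \<alpha> * f1 r c + (1-\<alpha>) * f2 r c) = s r" if "r \<in> R" for r
  proof -
    have "(\<Sum>c\<in>C. \<alpha> * f1 r c + (1-\<alpha>) * f2 r c) = \<alpha> * (\<Sum>c\<in>C. f1 r c) + (1-\<alpha>) * (\<Sum>c\<in>C. f2 r c)"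
      by (simp add: sum.distrib sum_distrib_left)
    also have "\<dots> = \<alpha> * s r + (1-\<alpha>) * s r" using assms(1,2) that unfolding gsol_def by simp
    finally show ?thesis by (simp add: algebra_simps)
  qed
  have cs: "(\<Sum>r\<in>R. \<alpha> * f1 r c + (1-\<alpha>) * f2 r c) = d c" if "c \<in> C" for c
  proof -
    have "(\<Sum>r\<in>R. \<alpha> * f1 r c + (1-\<alpha>) * f2 r c) = \<alpha> * (\<Sum>r\<in>R. f1 r c) + (1-\<alpha>) * (\<Sum>r\<in>R. f2 r c)"
      by (simp add: sum.distrib sum_distrib_left)
    then show ?thesis using assms(1,2,5) that unfolding gsol_def by simp
  qed
  show ?thesis unfolding gsol_def using b rs cs by auto
qed

definition shift :: "('c \<Rightarrow> real) \<Rightarrow> 'c \<Rightarrow> 'c \<Rightarrow> real \<Rightarrow> 'c \<Rightarrow> real" where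
  "shift d a b t = (\<lambda>c. d c + (if c = a then t else 0) - (if c = b then t else 0))"

lemma sum_shift:
  assumes "finite G"
  shows "sum (shift d a b t) G = sum d G + (if a \<in> G then t else 0) - (if b \<in> G then t else 0)"
  using assms unfolding shift_def by (simp add: sum.distrib sum_subtractf)

lemma shift_exists:
  assumes fR: "finite R" and fC: "finite C" and gc: "gcond R C s d U"
    and a: "a \<in> C" and b: "b \<in> C" and ab: "a \<noteq> b"
  shows "\<exists>t\<ge>0. gcond R C s (shift d a b t) U \<and> (shift d a b t b = 0 \<or>
     (\<exists>G. G \<noteq> {} \<and> G \<subset> C \<and> sum (shift d a b t) G = (\<Sum>r\<in>R. min (s r) (sum (U r) G))))"
proof -
  have U0: "\<forall>r\<in>R. \<forall>c\<in>C. 0 \<le> U r c" and s0: "\<forall>r\<in>R. 0 \<le> s r" and d0: "\<forall>c\<in>C. 0 \<le> d c"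
    and ss: "sum s R = sum d C" and cut: "\<forall>G. G \<subseteq> C \<longrightarrow> sum d G \<le> (\<Sum>r\<in>R. min (s r) (sum (U r) G))"
    using gc unfolding gcond_def by blast+
  define hh where "hh G = (\<Sum>r\<in>R. min (s r) (sum (U r) G))" for G
  define F where "F = {G. G \<subseteq> C \<and> a \<in> G \<and> b \<notin> G}"
  define S where "S = insert (d b) ((\<lambda>G. hh G - sum d G) ` F)"
  define t where "t = Min S"
  have fF: "finite F" unfolding F_def using fC by (auto intro: finite_subset[of _ "Pow C"])
  have fS: "finite S" using fF unfolding S_def by auto
  have tS: "t \<in> S" unfolding t_def using fS by (intro Min_in) (auto simp: S_def)
  have tle: "t \<le> x" if "x \<in> S" for x unfolding t_def using fS that by (intro Min_le)
  have tdb: "t \<le> d b" using tle by (auto simp: S_def)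
  have tG: "t \<le> hh G - sum d G" if "G \<in> F" for G using tle that by (auto simp: S_def)
  have t0: "0 \<le> t"
  proof -
    have "0 \<le> x" if "x \<in> S" for x
      using that d0 b cut unfolding S_def F_def hh_def by auto
    then show ?thesis using tS by blast
  qed
  have ssum: "sum (shift d a b t) G = sum d G + (if a \<in> G then t else 0) - (if b \<in> G then t else 0)"
    if "G \<subseteq> C" for G using that fC finite_subset by (intro sum_shift) blast
  have gc2: "gcond R C s (shift d a b t) U"
    unfolding gcond_def
  proof (intro conjI)
    show "\<forall>r\<in>R. 0 \<le> s r" by (rule s0)
    show "\<forall>r\<in>R. \<forall>c\<in>C. 0 \<le> U r c" by (rule U0)
    show "\<forall>c\<in>C. 0 \<le> shift d a b t c"
      using d0 t0 tdb ab unfolding shift_def by auto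
    show "sum s R = sum (shift d a b t) C" using ssum[of C] a b ss by simp
    show "\<forall>G\<subseteq>C. sum (shift d a b t) G \<le> (\<Sum>r\<in>R. min (s r) (sum (U r) G))"
    proof (intro allI impI)
      fix G assume G: "G \<subseteq> C"
      show "sum (shift d a b t) G \<le> (\<Sum>r\<in>R. min (s r) (sum (U r) G))"
      proof (cases "a \<in> G \<and> b \<notin> G")
        case True
        then have "G \<in> F" using G unfolding F_def by auto
        then show ?thesis using tG[of G] ssum[OF G] True unfolding hh_def by auto
      next
        case False
        then show ?thesis using ssum[OF G] cut G t0 by auto
      qed
    qed
  qed
  have "shift d a b t b = 0 \<or>
     (\<exists>G. G \<noteq> {} \<and> G \<subset> C \<and> sum (shift d a b t) G = (\<Sum>r\<in>R. min (s r) (sum (U r) G)))"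
  proof (cases "t = d b")
    case True then show ?thesis using ab unfolding shift_def by auto
  next
    case False
    then obtain G where G: "G \<in> F" "t = hh G - sum d G" using tS unfolding S_def by auto
    then have "G \<subseteq> C" "a \<in> G" "b \<notin> G" unfolding F_def by auto
    then have "G \<noteq> {} \<and> G \<subset> C \<and> sum (shift d a b t) G = (\<Sum>r\<in>R. min (s r) (sum (U r) G))"
      using ssum[of G] G(2) b unfolding hh_def by auto
    then show ?thesis by blast
  qed
  then show ?thesis using gc2 t0 by blast
qed

lemma gale:
  assumes fR: "finite R" and fC: "finite C" and gc: "gcond R C s d U"
  shows "\<exists>f. gsol R C s d U f"
  using fC gc
proof (induction C arbitrary: s d rule: finite_psubset_induct)
  case (psubset C)
  note IH = psubset.IH
  have A: "\<exists>f. gsol R C s d U f"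
    if gc: "gcond R C s d U" and alt: "(\<exists>c\<in>C. d c = 0) \<or>
       (\<exists>G. G \<noteq> {} \<and> G \<subset> C \<and> sum d G = (\<Sum>r\<in>R. min (s r) (sum (U r) G)))" for s d
    using alt
  proof
    assume "\<exists>c\<in>C. d c = 0"
    then obtain c where c: "c \<in> C" "d c = 0" by blast
    have "gcond R (C-{c}) s d U" using gcond_zero_col[OF psubset.hyps(1) gc c] .
    moreover have "C - {c} \<subset> C" using c by auto
    ultimately obtain f where "gsol R (C-{c}) s d U f" using IH by blast
    moreover have "\<forall>r\<in>R. 0 \<le> U r c" using gc c unfolding gcond_def by auto
    ultimately show ?thesis using gsol_zero_col[OF psubset.hyps(1), of R c s d U] c by blast
  next
    assume "\<exists>G. G \<noteq> {} \<and> G \<subset> C \<and> sum d G = (\<Sum>r\<in>R. min (s r) (sum (U r) G))"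
    then obtain G where G: "G \<noteq> {}" "G \<subset> C" and tight: "sum d G = (\<Sum>r\<in>R. min (s r) (sum (U r) G))"
      by blast
    have g1: "gcond R G (\<lambda>r. min (s r) (sum (U r) G)) d U"
      using gcond_split1[OF psubset.hyps(1) gc _ tight] G by auto
    have g2: "gcond R (C-G) (\<lambda>r. s r - min (s r) (sum (U r) G)) d U"
      using gcond_split2[OF fR psubset.hyps(1) gc _ tight] G by auto
    have "C - G \<subset> C" using G by auto
    then obtain f2 where f2: "gsol R (C-G) (\<lambda>r. s r - min (s r) (sum (U r) G)) d U f2"
      using IH g2 by blast
    obtain f1 where f1: "gsol R G (\<lambda>r. min (s r) (sum (U r) G)) d U f1"
      using IH g1 G by blast
    show ?thesis using gsol_split[OF psubset.hyps(1) _ f1 f2] G by auto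
  qed
  show ?case
  proof (cases "card C \<ge> 2")
    case True
    then have "\<not> card C \<le> Suc 0" by simp
    then obtain a b where ab: "a \<in> C" "b \<in> C" "a \<noteq> b"
      using card_le_Suc0_iff_eq[OF psubset.hyps(1)] by blast
    obtain t1 where t1: "t1 \<ge> 0" "gcond R C s (shift d a b t1) U"
      "shift d a b t1 b = 0 \<or> (\<exists>G. G \<noteq> {} \<and> G \<subset> C \<and> sum (shift d a b t1) G = (\<Sum>r\<in>R. min (s r) (sum (U r) G)))"
      using shift_exists[OF fR psubset.hyps(1) psubset.prems ab] by blast
    obtain t2 where t2: "t2 \<ge> 0" "gcond R C s (shift d b a t2) U"
      "shift d b a t2 a = 0 \<or> (\<exists>G. G \<noteq> {} \<and> G \<subset> C \<and> sum (shift d b a t2) G = (\<Sum>r\<in>R. min (s r) (sum (U r) G)))"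
      using shift_exists[OF fR psubset.hyps(1) psubset.prems ab(2,1)] ab(3) by metis
    obtain f1 where f1: "gsol R C s (shift d a b t1) U f1"
      using A[OF t1(2)] t1(3) ab by blast
    obtain f2 where f2: "gsol R C s (shift d b a t2) U f2"
      using A[OF t2(2)] t2(3) ab by blast
    show ?thesis
    proof (cases "t1 + t2 = 0")
      case True
      then have "t1 = 0" using t1(1) t2(1) by linarith
      then have "shift d a b t1 = d" unfolding shift_def by auto
      then show ?thesis using f1 by auto
    next
      case False
      then have pos: "t1 + t2 > 0" using t1(1) t2(1) by linarith
      define \<alpha> where "\<alpha> = t2 / (t1 + t2)"
      have a0: "0 \<le> \<alpha>" "\<alpha> \<le> 1" unfolding \<alpha>_def using pos t1(1) t2(1) by auto
      have "d c = \<alpha> * shift d a b t1 c + (1-\<alpha>) * shift d b a t2 c" for c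
      proof -
        have k: "\<alpha> * t1 = (1-\<alpha>) * t2" unfolding \<alpha>_def using pos by (simp add: field_simps)
        show ?thesis unfolding shift_def using k ab(3)
          by (cases "c = a"; cases "c = b") (auto simp: algebra_simps)
      qed
      then show ?thesis using gsol_convex[OF f1 f2 a0] by blast
    qed
  next
    case False
    then have "card C = 0 \<or> card C = 1" by linarith
    then show ?thesis
    proof
      assume "card C = 0"
      then have C0: "C = {}" using psubset.hyps(1) by auto
      have s0: "\<forall>r\<in>R. 0 \<le> s r" "sum s R = 0" using psubset.prems C0 unfolding gcond_def by auto
      then have "\<forall>r\<in>R. s r = 0" using sum_nonneg_eq_0_iff[OF fR] by blast
      then have "gsol R C s d U (\<lambda>r c. 0)" using C0 unfolding gsol_def by auto
      then show ?thesis by blast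
    next
      assume "card C = 1"
      then obtain c where C1: "C = {c}" using card_1_singletonE by blast
      have s0: "\<forall>r\<in>R. 0 \<le> s r" "sum s R = d c" "d c \<le> (\<Sum>r\<in>R. min (s r) (U r c))"
        using psubset.prems C1 unfolding gcond_def by auto
      have "(\<Sum>r\<in>R. s r - min (s r) (U r c)) = 0"
      proof -
        have "(\<Sum>r\<in>R. s r - min (s r) (U r c)) \<le> 0" using s0 by (simp add: sum_subtractf)
        moreover have "(\<Sum>r\<in>R. s r - min (s r) (U r c)) \<ge> 0" by (intro sum_nonneg) auto
        ultimately show ?thesis by linarith
      qed
      then have "\<forall>r\<in>R. s r - min (s r) (U r c) = 0"
        using sum_nonneg_eq_0_iff[OF fR, of "\<lambda>r. s r - min (s r) (U r c)"] by auto
      then have le: "\<forall>r\<in>R. s r \<le> U r c" by (auto simp: min_def split: if_splits)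
      have "gsol R C s d U (\<lambda>r c. s r)" using C1 s0 le unfolding gsol_def by auto
      then show ?thesis by blast
    qed
  qed
qed



lemma nec_key1:
  assumes finT1: "finite T1" and finT2: "finite T2" and E1: "E1 \<subseteq> T1"
    and lam_prod: "\<forall>t1\<in>T1. \<forall>t2\<in>T2. lam (t1, t2) = marg1 T2 lam t1 * marg2 T1 lam t2"
    and m1: "\<forall>t1\<in>T1. Q1 t1 = (\<Sum>t2\<in>T2. q (t1, t2) * marg2 T1 lam t2)"
  shows "(\<Sum>t1\<in>E1. Q1 t1 * marg1 T2 lam t1) = (\<Sum>t\<in>T1 \<times> T2. if fst t \<in> E1 then q t * lam t else 0)"
proof -
  have "(\<Sum>t1\<in>E1. Q1 t1 * marg1 T2 lam t1) = (\<Sum>t1\<in>E1. \<Sum>t2\<in>T2. q (t1,t2) * lam (t1,t2))"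
  proof (rule sum.cong)
    fix t1 assume t1: "t1 \<in> E1"
    then have "t1 \<in> T1" using E1 by auto
    then show "Q1 t1 * marg1 T2 lam t1 = (\<Sum>t2\<in>T2. q (t1,t2) * lam (t1,t2))"
      using m1 lam_prod by (simp add: sum_distrib_right sum_distrib_left mult_ac)
  qed simp
  also have "\<dots> = (\<Sum>t\<in>E1 \<times> T2. q t * lam t)"
    by (simp add: sum.cartesian_product case_prod_beta')
  also have "E1 \<times> T2 = {t \<in> T1 \<times> T2. fst t \<in> E1}" using E1 by auto
  also have "(\<Sum>t\<in>{t \<in> T1 \<times> T2. fst t \<in> E1}. q t * lam t) = (\<Sum>t\<in>T1 \<times> T2. if fst t \<in> E1 then q t * lam t else 0)"
    using finT1 finT2 by (simp add: sum.inter_filter)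
  finally show ?thesis .
qed

lemma nec_key2:
  assumes finT1: "finite T1" and finT2: "finite T2" and E2: "E2 \<subseteq> T2"
    and lam_prod: "\<forall>t1\<in>T1. \<forall>t2\<in>T2. lam (t1, t2) = marg1 T2 lam t1 * marg2 T1 lam t2"
    and m2: "\<forall>t2\<in>T2. Q2 t2 = (\<Sum>t1\<in>T1. q (t1, t2) * marg1 T2 lam t1)"
  shows "(\<Sum>t2\<in>E2. Q2 t2 * marg2 T1 lam t2) = (\<Sum>t\<in>T1 \<times> T2. if snd t \<in> E2 then q t * lam t else 0)"
proof -
  have "(\<Sum>t2\<in>E2. Q2 t2 * marg2 T1 lam t2) = (\<Sum>t2\<in>E2. \<Sum>t1\<in>T1. q (t1,t2) * lam (t1,t2))"
  proof (rule sum.cong)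
    fix t2 assume t2: "t2 \<in> E2"
    then have "t2 \<in> T2" using E2 by auto
    then show "Q2 t2 * marg2 T1 lam t2 = (\<Sum>t1\<in>T1. q (t1,t2) * lam (t1,t2))"
      using m2 lam_prod by (simp add: sum_distrib_right sum_distrib_left mult_ac)
  qed simp
  also have "\<dots> = (\<Sum>t1\<in>T1. \<Sum>t2\<in>E2. q (t1,t2) * lam (t1,t2))"
    by (rule sum.swap)
  also have "\<dots> = (\<Sum>t\<in>T1 \<times> E2. q t * lam t)"
    by (simp add: sum.cartesian_product case_prod_beta')
  also have "T1 \<times> E2 = {t \<in> T1 \<times> T2. snd t \<in> E2}" using E2 by auto
  also have "(\<Sum>t\<in>{t \<in> T1 \<times> T2. snd t \<in> E2}. q t * lam t) = (\<Sum>t\<in>T1 \<times> T2. if snd t \<in> E2 then q t * lam t else 0)"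
    using finT1 finT2 by (simp add: sum.inter_filter)
  finally show ?thesis .
qed

lemma necessity:
  assumes finK: "finite K" and finT1: "finite T1" and finT2: "finite T2"
    and lam_pos: "\<forall>t\<in>T1 \<times> T2. lam t > 0"
    and lam_prod: "\<forall>t1\<in>T1. \<forall>t2\<in>T2. lam (t1, t2) = marg1 T2 lam t1 * marg2 T1 lam t2"
    and impl: "implementable K T1 T2 lam Q1 Q2"
  shows "((\<forall>k\<in>K - {k0}.
        (\<Sum>t1\<in>T1. Q1 k t1 * marg1 T2 lam t1) - (\<Sum>t2\<in>T2. Q2 k t2 * marg2 T1 lam t2) = 0) \<and>
     (\<forall>k\<in>K - {k0}. (\<forall>t1\<in>T1. Q1 k t1 \<ge> 0) \<and> (\<forall>t2\<in>T2. Q2 k t2 \<ge> 0)) \<and>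
     (\<forall>G E1 E2. G \<subseteq> K - {k0} \<longrightarrow> E1 \<subseteq> T1 \<longrightarrow> E2 \<subseteq> T2 \<longrightarrow>
        (\<Sum>k\<in>G. (\<Sum>t1\<in>E1. Q1 k t1 * marg1 T2 lam t1) - (\<Sum>t2\<in>E2. Q2 k t2 * marg2 T1 lam t2))
          \<le> (\<Sum>t\<in>E1 \<times> (T2 - E2). lam t)))"
proof -
  obtain q where feas: "feasible_ex_post K T1 T2 q"
    and m1: "\<forall>k\<in>K. \<forall>t1\<in>T1. Q1 k t1 = (\<Sum>t2\<in>T2. q k (t1, t2) * marg2 T1 lam t2)"
    and m2: "\<forall>k\<in>K. \<forall>t2\<in>T2. Q2 k t2 = (\<Sum>t1\<in>T1. q k (t1, t2) * marg1 T2 lam t1)"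
    using impl unfolding implementable_def by blast
  have q0: "\<forall>t\<in>T1 \<times> T2. \<forall>k\<in>K. q k t \<ge> 0" and q1: "\<forall>t\<in>T1 \<times> T2. (\<Sum>k\<in>K. q k t) = 1"
    using feas unfolding feasible_ex_post_def by auto
  have l1nn: "marg1 T2 lam t1 \<ge> 0" if "t1 \<in> T1" for t1
    unfolding marg1_def using lam_pos that by (intro sum_nonneg) (auto intro: less_imp_le)
  have l2nn: "marg2 T1 lam t2 \<ge> 0" if "t2 \<in> T2" for t2
    unfolding marg2_def using lam_pos that by (intro sum_nonneg) (auto intro: less_imp_le)
  have k1: "(\<Sum>t1\<in>E1. Q1 k t1 * marg1 T2 lam t1) = (\<Sum>t\<in>T1 \<times> T2. if fst t \<in> E1 then q k t * lam t else 0)"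
    if "k \<in> K" "E1 \<subseteq> T1" for k E1
    using nec_key1[OF finT1 finT2 that(2) lam_prod, of "Q1 k" "q k"] m1 that(1) by blast
  have k2: "(\<Sum>t2\<in>E2. Q2 k t2 * marg2 T1 lam t2) = (\<Sum>t\<in>T1 \<times> T2. if snd t \<in> E2 then q k t * lam t else 0)"
    if "k \<in> K" "E2 \<subseteq> T2" for k E2
    using nec_key2[OF finT1 finT2 that(2) lam_prod, of "Q2 k" "q k"] m2 that(1) by blast
  have pa: "\<forall>k\<in>K - {k0}.
        (\<Sum>t1\<in>T1. Q1 k t1 * marg1 T2 lam t1) - (\<Sum>t2\<in>T2. Q2 k t2 * marg2 T1 lam t2) = 0"
  proof
    fix k assume k: "k \<in> K - {k0}"
    have "(\<Sum>t\<in>T1 \<times> T2. if fst t \<in> T1 then q k t * lam t else 0) = (\<Sum>t\<in>T1 \<times> T2. if snd t \<in> T2 then q k t * lam t else 0)"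
      by (rule sum.cong) auto
    then show "(\<Sum>t1\<in>T1. Q1 k t1 * marg1 T2 lam t1) - (\<Sum>t2\<in>T2. Q2 k t2 * marg2 T1 lam t2) = 0"
      using k1[of k T1] k2[of k T2] k by simp
  qed
  have pb: "\<forall>k\<in>K - {k0}. (\<forall>t1\<in>T1. Q1 k t1 \<ge> 0) \<and> (\<forall>t2\<in>T2. Q2 k t2 \<ge> 0)"
    using m1 m2 q0 l1nn l2nn by (auto intro!: sum_nonneg)
  have pc: "(\<Sum>k\<in>G. (\<Sum>t1\<in>E1. Q1 k t1 * marg1 T2 lam t1) - (\<Sum>t2\<in>E2. Q2 k t2 * marg2 T1 lam t2))
          \<le> (\<Sum>t\<in>E1 \<times> (T2 - E2). lam t)"
    if G: "G \<subseteq> K - {k0}" and E1: "E1 \<subseteq> T1" and E2: "E2 \<subseteq> T2" for G E1 E2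
  proof -
    let ?P = "\<lambda>t. fst t \<in> E1 \<and> snd t \<notin> E2"
    have "(\<Sum>k\<in>G. (\<Sum>t1\<in>E1. Q1 k t1 * marg1 T2 lam t1) - (\<Sum>t2\<in>E2. Q2 k t2 * marg2 T1 lam t2))
       = (\<Sum>k\<in>G. \<Sum>t\<in>T1 \<times> T2. (if fst t \<in> E1 then q k t * lam t else 0) - (if snd t \<in> E2 then q k t * lam t else 0))"
      by (rule sum.cong) (use G E1 E2 k1 k2 in \<open>auto simp: sum_subtractf\<close>)
    also have "\<dots> \<le> (\<Sum>k\<in>G. \<Sum>t\<in>T1 \<times> T2. if ?P t then q k t * lam t else 0)"
    proof (intro sum_mono)
      fix k t assume k: "k \<in> G" and t: "t \<in> T1 \<times> T2"
      have "0 \<le> q k t" "0 < lam t" using q0 lam_pos k t G by auto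
      then have "0 \<le> q k t * lam t" by simp
      then show "(if fst t \<in> E1 then q k t * lam t else 0) - (if snd t \<in> E2 then q k t * lam t else 0)
          \<le> (if ?P t then q k t * lam t else 0)" by auto
    qed
    also have "\<dots> = (\<Sum>t\<in>T1 \<times> T2. \<Sum>k\<in>G. if ?P t then q k t * lam t else 0)"
      by (rule sum.swap)
    also have "\<dots> \<le> (\<Sum>t\<in>T1 \<times> T2. if ?P t then lam t else 0)"
    proof (intro sum_mono)
      fix t assume t: "t \<in> T1 \<times> T2"
      show "(\<Sum>k\<in>G. if ?P t then q k t * lam t else 0) \<le> (if ?P t then lam t else 0)"
      proof (cases "?P t")
        case True
        have "(\<Sum>k\<in>G. q k t) \<le> (\<Sum>k\<in>K. q k t)"
          using G q0 t finK by (intro sum_mono2) auto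
        then have "(\<Sum>k\<in>G. q k t) \<le> 1" using q1 t by simp
        moreover have "(\<Sum>k\<in>G. q k t * lam t) = (\<Sum>k\<in>G. q k t) * lam t" by (simp add: sum_distrib_right)
        moreover have "lam t > 0" using lam_pos t by auto
        ultimately show ?thesis using True by (simp add: mult_le_cancel_right1)
      next
        case False
        then show ?thesis by (simp only: if_False sum.neutral_const)
      qed
    qed
    also have "\<dots> = (\<Sum>t\<in>{t \<in> T1 \<times> T2. ?P t}. lam t)"
      using finT1 finT2 by (simp add: sum.inter_filter)
    also have "{t \<in> T1 \<times> T2. ?P t} = E1 \<times> (T2 - E2)" using E1 by auto
    finally show ?thesis .
  qed
  show ?thesis using pa pb pc by blast
qed



lemma suff:
  fixes K :: "'k set" and k0 :: 'k
    and T1 :: "'a set" and T2 :: "'b set"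
    and lam :: "'a \<times> 'b \<Rightarrow> real"
    and Q1 :: "'k \<Rightarrow> 'a \<Rightarrow> real" and Q2 :: "'k \<Rightarrow> 'b \<Rightarrow> real"
  assumes finK: "finite K" and k0K: "k0 \<in> K"
    and finT1: "finite T1" and finT2: "finite T2"
    and card1: "card T1 = 2"
    and lam_pos: "\<forall>t\<in>T1 \<times> T2. lam t > 0"
    and lam_sum: "(\<Sum>t\<in>T1 \<times> T2. lam t) = 1"
    and lam_prod: "\<forall>t1\<in>T1. \<forall>t2\<in>T2. lam (t1, t2) = marg1 T2 lam t1 * marg2 T1 lam t2"
    and Q1_sum: "\<forall>t1\<in>T1. (\<Sum>k\<in>K. Q1 k t1) = 1"
    and Q2_sum: "\<forall>t2\<in>T2. (\<Sum>k\<in>K. Q2 k t2) = 1"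
    and A: "\<forall>k\<in>K - {k0}.
        (\<Sum>t1\<in>T1. Q1 k t1 * marg1 T2 lam t1) - (\<Sum>t2\<in>T2. Q2 k t2 * marg2 T1 lam t2) = 0"
    and B: "\<forall>k\<in>K - {k0}. (\<forall>t1\<in>T1. Q1 k t1 \<ge> 0) \<and> (\<forall>t2\<in>T2. Q2 k t2 \<ge> 0)"
    and C: "\<forall>G E1 E2. G \<subseteq> K - {k0} \<longrightarrow> E1 \<subseteq> T1 \<longrightarrow> E2 \<subseteq> T2 \<longrightarrow>
        (\<Sum>k\<in>G. (\<Sum>t1\<in>E1. Q1 k t1 * marg1 T2 lam t1) - (\<Sum>t2\<in>E2. Q2 k t2 * marg2 T1 lam t2))
          \<le> (\<Sum>t\<in>E1 \<times> (T2 - E2). lam t)"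
  shows "implementable K T1 T2 lam Q1 Q2"
proof -
  obtain a b where T1: "T1 = {a,b}" and ab: "a \<noteq> b" using card1 card_2_iff by metis
  have aT: "a \<in> T1" and bT: "b \<in> T1" using T1 by auto
  define l1 where "l1 = marg1 T2 lam"
  define l2 where "l2 = marg2 T1 lam"
  define p where "p = l1 a"
  have l2_eq: "l2 t = lam (a,t) + lam (b,t)" for t unfolding l2_def marg2_def T1 using ab by simp
  have l1_eq: "l1 t1 = (\<Sum>t2\<in>T2. lam (t1,t2))" for t1 unfolding l1_def marg1_def ..
  have l2pos: "0 < l2 t" if "t \<in> T2" for t
  proof -
    have "0 < lam (a,t)" "0 < lam (b,t)" using lam_pos that aT bT by auto
    then show ?thesis using l2_eq by simp
  qed
  have l2ne: "l2 t \<noteq> 0" if "t \<in> T2" for t using l2pos[OF that] by simp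
  have T2ne: "T2 \<noteq> {}" using lam_sum by auto
  have l1pos: "0 < l1 t1" if "t1 \<in> T1" for t1
    unfolding l1_eq using lam_pos that finT2 T2ne by (intro sum_pos) auto
  have prodsum: "(\<Sum>t\<in>A \<times> B. lam t) = (\<Sum>x\<in>A. \<Sum>y\<in>B. lam (x,y))" for A B
    by (simp add: sum.cartesian_product case_prod_beta')
  have tot: "l1 a + l1 b = 1"
    using lam_sum unfolding prodsum l1_eq T1 using ab by simp
  have sum_l2: "(\<Sum>t\<in>T2. l2 t) = 1"
    using tot unfolding l2_eq l1_eq by (simp add: sum.distrib)
  have p0: "0 < p" unfolding p_def using l1pos aT by auto
  have p1: "l1 b = 1 - p" unfolding p_def using tot by simp
  have p1': "0 < 1 - p" using l1pos[OF bT] p1 by simp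
  have lam_a: "lam (a,t) = p * l2 t" if "t \<in> T2" for t
    using lam_prod aT that unfolding p_def l1_def l2_def by auto
  have lam_b: "lam (b,t) = (1 - p) * l2 t" if "t \<in> T2" for t
    using lam_prod bT that p1 unfolding l1_def l2_def by auto
  note C' = C[unfolded l1_def[symmetric] l2_def[symmetric]]
  note A' = A[unfolded l1_def[symmetric] l2_def[symmetric]]
  have AA: "Q1 k a * p + Q1 k b * (1-p) = (\<Sum>t\<in>T2. Q2 k t * l2 t)" if k: "k \<in> K" for k
  proof -
    have eq: "Q1 k a * p + Q1 k b * (1-p) = (\<Sum>t\<in>T2. Q2 k t * l2 t)" if "k \<in> K - {k0}" for k
      using A' that ab p1 unfolding T1 p_def by simp
    have s1: "(\<Sum>k\<in>K. Q1 k a * p + Q1 k b * (1-p)) = 1"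
      using Q1_sum aT bT by (simp add: sum.distrib sum_distrib_right[symmetric])
    have s2: "(\<Sum>k\<in>K. \<Sum>t\<in>T2. Q2 k t * l2 t) = 1"
    proof -
      have "(\<Sum>k\<in>K. \<Sum>t\<in>T2. Q2 k t * l2 t) = (\<Sum>t\<in>T2. \<Sum>k\<in>K. Q2 k t * l2 t)" by (rule sum.swap)
      also have "\<dots> = (\<Sum>t\<in>T2. l2 t)" using Q2_sum by (simp add: sum_distrib_right[symmetric])
      finally show ?thesis using sum_l2 by simp
    qed
    have r1: "(\<Sum>k\<in>K. Q1 k a * p + Q1 k b * (1-p)) = (Q1 k0 a * p + Q1 k0 b * (1-p)) + (\<Sum>k\<in>K-{k0}. Q1 k a * p + Q1 k b * (1-p))"
      using finK k0K by (rule sum.remove)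
    have r2: "(\<Sum>k\<in>K. \<Sum>t\<in>T2. Q2 k t * l2 t) = (\<Sum>t\<in>T2. Q2 k0 t * l2 t) + (\<Sum>k\<in>K-{k0}. \<Sum>t\<in>T2. Q2 k t * l2 t)"
      using finK k0K by (rule sum.remove)
    have r3: "(\<Sum>k\<in>K-{k0}. Q1 k a * p + Q1 k b * (1-p)) = (\<Sum>k\<in>K-{k0}. \<Sum>t\<in>T2. Q2 k t * l2 t)"
      using eq by (rule sum.cong[OF refl])
    show ?thesis
    proof (cases "k = k0")
      case True show ?thesis unfolding True using s1 s2 r1 r2 r3 by linarith
    next
      case False then show ?thesis using eq k by blast
    qed
  qed
  have Q1nn: "0 \<le> Q1 k t1" if k: "k \<in> K" and t1: "t1 \<in> T1" for k t1
  proof (cases "k = k0")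
    case False then show ?thesis using B k t1 by auto
  next
    case True
    have "(\<Sum>k\<in>K-{k0}. (\<Sum>t1'\<in>{t1}. Q1 k t1' * l1 t1') - (\<Sum>t2\<in>{}. Q2 k t2 * l2 t2))
          \<le> (\<Sum>t\<in>{t1} \<times> (T2 - {}). lam t)"
      using C'[rule_format, of "K-{k0}" "{t1}" "{}"] t1 by simp
    moreover have "(\<Sum>x\<in>{t1} \<times> (T2 - {}). lam x) = l1 t1" by (simp add: prodsum l1_eq)
    ultimately have "(\<Sum>k\<in>K-{k0}. Q1 k t1) * l1 t1 \<le> 1 * l1 t1"
      by (simp add: sum_distrib_right)
    then have "(\<Sum>k\<in>K-{k0}. Q1 k t1) \<le> 1" using l1pos[OF t1] by (simp only: mult_le_cancel_right_pos)
    moreover have "(\<Sum>k\<in>K. Q1 k t1) = Q1 k0 t1 + (\<Sum>k\<in>K-{k0}. Q1 k t1)"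
      using finK k0K by (rule sum.remove)
    ultimately show ?thesis using Q1_sum t1 True by auto
  qed
  have Q2nn: "0 \<le> Q2 k t" if k: "k \<in> K" and t: "t \<in> T2" for k t
  proof (cases "k = k0")
    case False then show ?thesis using B k t by auto
  next
    case True
    have "(\<Sum>k\<in>K-{k0}. (\<Sum>t1\<in>T1. Q1 k t1 * l1 t1) - (\<Sum>t2\<in>T2-{t}. Q2 k t2 * l2 t2))
          \<le> (\<Sum>x\<in>T1 \<times> (T2 - (T2-{t})). lam x)"
      using C'[rule_format, of "K-{k0}" "T1" "T2-{t}"] by simp
    moreover have "T2 - (T2-{t}) = {t}" using t by auto
    moreover have "(\<Sum>k\<in>K-{k0}. (\<Sum>t1\<in>T1. Q1 k t1 * l1 t1) - (\<Sum>t2\<in>T2-{t}. Q2 k t2 * l2 t2))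
       = (\<Sum>k\<in>K-{k0}. Q2 k t * l2 t)"
    proof (rule sum.cong[OF refl])
      fix k assume "k \<in> K - {k0}"
      then show "(\<Sum>t1\<in>T1. Q1 k t1 * l1 t1) - (\<Sum>t2\<in>T2-{t}. Q2 k t2 * l2 t2) = Q2 k t * l2 t"
        using A' t finT2 by (simp add: sum_diff1)
    qed
    moreover have "(\<Sum>x\<in>T1 \<times> {t}. lam x) = l2 t" by (simp add: prodsum l2_def marg2_def)
    ultimately have "(\<Sum>k\<in>K-{k0}. Q2 k t) * l2 t \<le> 1 * l2 t"
      by (simp add: sum_distrib_right)
    then have "(\<Sum>k\<in>K-{k0}. Q2 k t) \<le> 1" using l2pos[OF t] by (simp only: mult_le_cancel_right_pos)
    moreover have "(\<Sum>k\<in>K. Q2 k t) = Q2 k0 t + (\<Sum>k\<in>K-{k0}. Q2 k t)"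
      using finK k0K by (rule sum.remove)
    ultimately show ?thesis using Q2_sum t True by auto
  qed
  define d where "d k = Q1 k a" for k
  define U where "U t k = l2 t * Q2 k t / p" for t k
  define W where "W S G = (\<Sum>k\<in>G. \<Sum>t\<in>S. Q2 k t * l2 t)" for S G
  have US: "(\<Sum>t\<in>S. sum (U t) G) = W S G / p" for S G
  proof -
    have "(\<Sum>t\<in>S. sum (U t) G) = (\<Sum>t\<in>S. \<Sum>k\<in>G. Q2 k t * l2 t / p)"
      unfolding U_def by (simp add: mult.commute)
    also have "\<dots> = (\<Sum>k\<in>G. \<Sum>t\<in>S. Q2 k t * l2 t / p)" by (rule sum.swap)
    also have "\<dots> = W S G / p" unfolding W_def by (simp add: sum_divide_distrib)
    finally show ?thesis .
  qed
  have UK: "sum (U t) K = l2 t / p" if "t \<in> T2" for t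
  proof -
    have "sum (U t) K = l2 t * (\<Sum>k\<in>K. Q2 k t) / p"
      unfolding U_def by (simp add: sum_divide_distrib sum_distrib_left)
    then show ?thesis using Q2_sum that by simp
  qed
  have cut: "sum d G \<le> (\<Sum>t\<in>T2. min (l2 t) (sum (U t) G))" if G: "G \<subseteq> K" for G
  proof -
    define S where "S = {t\<in>T2. sum (U t) G < l2 t}"
    have ST: "S \<subseteq> T2" unfolding S_def by auto
    have e1: "T2 \<inter> {x. x \<in> S} = S" "T2 \<inter> - {x. x \<in> S} = T2 - S" using ST by auto
    have "(\<Sum>t\<in>T2. min (l2 t) (sum (U t) G)) = (\<Sum>t\<in>T2. if t \<in> S then sum (U t) G else l2 t)"
      by (rule sum.cong) (auto simp: S_def min_def)
    also have "\<dots> = (\<Sum>t\<in>S. sum (U t) G) + (\<Sum>t\<in>T2 - S. l2 t)"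
      using finT2 by (simp only: sum.If_cases e1)
    finally have eqmin: "(\<Sum>t\<in>T2. min (l2 t) (sum (U t) G)) = W S G / p + (\<Sum>t\<in>T2 - S. l2 t)"
      using US by simp
    have sS: "(\<Sum>t\<in>T2 - S. l2 t) = 1 - (\<Sum>t\<in>S. l2 t)" using sum_diff[OF finT2 ST, of l2] sum_l2 by simp
    show ?thesis
    proof (cases "k0 \<in> G")
      case False
      then have G': "G \<subseteq> K - {k0}" using G by auto
      have c: "(\<Sum>k\<in>G. (\<Sum>t1\<in>{a}. Q1 k t1 * l1 t1) - (\<Sum>t2\<in>S. Q2 k t2 * l2 t2))
          \<le> (\<Sum>x\<in>{a} \<times> (T2 - S). lam x)"
        using C'[rule_format, of G "{a}" S] G' aT ST by simp
      have lhs: "(\<Sum>k\<in>G. (\<Sum>t1\<in>{a}. Q1 k t1 * l1 t1) - (\<Sum>t2\<in>S. Q2 k t2 * l2 t2)) = p * sum d G - W S G"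
        unfolding W_def d_def p_def by (simp add: sum_subtractf sum_distrib_left mult.commute)
      have rhs: "(\<Sum>x\<in>{a} \<times> (T2 - S). lam x) = p * (\<Sum>t\<in>T2 - S. l2 t)"
        by (simp add: prodsum sum_distrib_left lam_a)
      have "p * sum d G \<le> p * (W S G / p + (\<Sum>t\<in>T2 - S. l2 t))"
        using c lhs rhs p0 by (simp add: algebra_simps)
      then show ?thesis using eqmin p0 by (simp only: mult_le_cancel_left_pos)
    next
      case True
      define H where "H = K - G"
      have H: "H \<subseteq> K - {k0}" unfolding H_def using True by auto
      have c: "(\<Sum>k\<in>H. (\<Sum>t1\<in>{b}. Q1 k t1 * l1 t1) - (\<Sum>t2\<in>T2 - S. Q2 k t2 * l2 t2))
          \<le> (\<Sum>x\<in>{b} \<times> (T2 - (T2 - S)). lam x)"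
        using C'[rule_format, of H "{b}" "T2 - S"] H bT by auto
      have TS: "T2 - (T2 - S) = S" using ST by auto
      have lhs: "(\<Sum>k\<in>H. (\<Sum>t1\<in>{b}. Q1 k t1 * l1 t1) - (\<Sum>t2\<in>T2 - S. Q2 k t2 * l2 t2)) = W S H - p * sum d H"
      proof -
        have "(\<Sum>k\<in>H. (\<Sum>t1\<in>{b}. Q1 k t1 * l1 t1) - (\<Sum>t2\<in>T2 - S. Q2 k t2 * l2 t2))
           = (\<Sum>k\<in>H. (\<Sum>t\<in>S. Q2 k t * l2 t) - p * d k)"
        proof (rule sum.cong[OF refl])
          fix k assume k: "k \<in> H"
          then have kK: "k \<in> K" using H by auto
          have "(\<Sum>t2\<in>T2 - S. Q2 k t2 * l2 t2) = (\<Sum>t\<in>T2. Q2 k t * l2 t) - (\<Sum>t\<in>S. Q2 k t * l2 t)"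
            using sum_diff[OF finT2 ST] by simp
          then show "(\<Sum>t1\<in>{b}. Q1 k t1 * l1 t1) - (\<Sum>t2\<in>T2 - S. Q2 k t2 * l2 t2) = (\<Sum>t\<in>S. Q2 k t * l2 t) - p * d k"
            using AA[OF kK] unfolding d_def by (simp add: p1 algebra_simps)
        qed
        also have "\<dots> = W S H - p * sum d H"
          unfolding W_def by (simp add: sum_subtractf sum_distrib_left)
        finally show ?thesis .
      qed
      have rhs: "(\<Sum>x\<in>{b} \<times> (T2 - (T2 - S)). lam x) = (1 - p) * (\<Sum>t\<in>S. l2 t)"
        unfolding TS using ST by (simp add: prodsum sum_distrib_left lam_b subset_iff)
      have key: "W S H - p * sum d H \<le> (1 - p) * (\<Sum>t\<in>S. l2 t)" using c lhs rhs by simp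
      have dG: "sum d G = 1 - sum d H"
        using sum_diff[OF finK G, of d] Q1_sum aT unfolding H_def d_def by simp
      have WG: "W S G = (\<Sum>t\<in>S. l2 t) - W S H"
      proof -
        have "W S G / p = (\<Sum>t\<in>S. sum (U t) K - sum (U t) H)"
          unfolding US[symmetric] H_def
          by (rule sum.cong[OF refl]) (simp add: sum_diff[OF finK G])
        also have "\<dots> = (\<Sum>t\<in>S. l2 t / p) - W S H / p"
          using UK ST by (simp add: sum_subtractf US subset_iff)
        finally have "W S G / p = ((\<Sum>t\<in>S. l2 t) - W S H) / p"
          by (simp add: sum_divide_distrib diff_divide_distrib)
        then show ?thesis using p0 by simp
      qed
      have "p * sum d G \<le> p * (W S G / p + (\<Sum>t\<in>T2 - S. l2 t))"
      proof -
        have e1: "p * sum d G = p - p * sum d H" unfolding dG by (simp add: algebra_simps)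
        have e2: "p * (\<Sum>t\<in>T2 - S. l2 t) = p - p * (\<Sum>t\<in>S. l2 t)" unfolding sS by (simp add: algebra_simps)
        have e3: "p * (W S G / p + (\<Sum>t\<in>T2 - S. l2 t)) = W S G + p * (\<Sum>t\<in>T2 - S. l2 t)"
          using p0 by (simp add: algebra_simps)
        show ?thesis unfolding e3 using e1 e2 key WG by (simp add: algebra_simps)
      qed
      then show ?thesis using eqmin p0 by (simp only: mult_le_cancel_left_pos)
    qed
  qed
  have gc: "gcond T2 K l2 d U"
    unfolding gcond_def
  proof (intro conjI)
    show "\<forall>r\<in>T2. 0 \<le> l2 r" using l2pos by (auto intro: less_imp_le)
    show "\<forall>c\<in>K. 0 \<le> d c" using Q1nn aT unfolding d_def by auto
    show "\<forall>r\<in>T2. \<forall>c\<in>K. 0 \<le> U r c"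
    proof (intro ballI)
      fix r c assume "r \<in> T2" "c \<in> K"
      then have "0 \<le> l2 r" "0 \<le> Q2 c r" using Q2nn l2pos by (auto intro: less_imp_le)
      then show "0 \<le> U r c" unfolding U_def using p0 by simp
    qed
    show "sum l2 T2 = sum d K" using sum_l2 Q1_sum aT unfolding d_def by simp
    show "\<forall>G\<subseteq>K. sum d G \<le> (\<Sum>r\<in>T2. min (l2 r) (sum (U r) G))" using cut by blast
  qed
  obtain f where f: "gsol T2 K l2 d U f" using gale[OF finT2 finK gc] by blast
  have f0: "0 \<le> f t k" and fU: "f t k \<le> U t k" if "t \<in> T2" "k \<in> K" for t k
    using f that unfolding gsol_def by auto
  have frow: "(\<Sum>k\<in>K. f t k) = l2 t" if "t \<in> T2" for t using f that unfolding gsol_def by auto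
  have fcol: "(\<Sum>t\<in>T2. f t k) = Q1 k a" if "k \<in> K" for k using f that unfolding gsol_def d_def by auto
  define q where "q k x = (if fst x = a then f (snd x) k / l2 (snd x)
       else (Q2 k (snd x) - p * (f (snd x) k / l2 (snd x))) / (1 - p))" for k x
  have qa: "q k (a,t) = f t k / l2 t" for k t unfolding q_def by simp
  have qb: "q k (b,t) = (Q2 k t - p * (f t k / l2 t)) / (1 - p)" for k t unfolding q_def using ab by simp
  have pf: "p * (f t k / l2 t) \<le> Q2 k t" if "t \<in> T2" "k \<in> K" for t k
  proof -
    have "f t k * p \<le> l2 t * Q2 k t" using fU[OF that] p0 unfolding U_def by (simp add: le_divide_eq)
    then show ?thesis using l2pos[OF that(1)] by (simp add: field_simps)
  qed
  have feas: "feasible_ex_post K T1 T2 q"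
    unfolding feasible_ex_post_def
  proof (intro conjI ballI)
    fix x k assume x: "x \<in> T1 \<times> T2" and k: "k \<in> K"
    then obtain t1 t where xt: "x = (t1,t)" "t1 \<in> T1" "t \<in> T2" by auto
    show "0 \<le> q k x"
    proof (cases "t1 = a")
      case True then show ?thesis using xt f0[OF xt(3) k] l2pos[OF xt(3)] qa by simp
    next
      case False then have "t1 = b" using xt T1 by auto
      then show ?thesis using xt qb pf[OF xt(3) k] p1' by simp
    qed
  next
    fix x assume x: "x \<in> T1 \<times> T2"
    then obtain t1 t where xt: "x = (t1,t)" "t1 \<in> T1" "t \<in> T2" by auto
    show "(\<Sum>k\<in>K. q k x) = 1"
    proof (cases "t1 = a")
      case True then show ?thesis using xt frow[OF xt(3)] l2pos[OF xt(3)] qa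
        by (simp add: sum_divide_distrib[symmetric])
    next
      case False then have "t1 = b" using xt T1 by auto
      then have "(\<Sum>k\<in>K. q k x) = ((\<Sum>k\<in>K. Q2 k t) - p * ((\<Sum>k\<in>K. f t k) / l2 t)) / (1 - p)"
        using xt qb by (simp add: sum_divide_distrib[symmetric] sum_subtractf sum_distrib_left)
      then show ?thesis using Q2_sum frow[OF xt(3)] l2pos[OF xt(3)] xt p1' by simp
    qed
  qed
  have m1: "Q1 k t1 = (\<Sum>t2\<in>T2. q k (t1, t2) * marg2 T1 lam t2)" if k: "k \<in> K" and t1: "t1 \<in> T1" for k t1
  proof (cases "t1 = a")
    case True
    have "(\<Sum>t2\<in>T2. q k (t1, t2) * marg2 T1 lam t2) = (\<Sum>t2\<in>T2. f t2 k)"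
      using True qa l2ne unfolding l2_def[symmetric] by (intro sum.cong) auto
    then show ?thesis using fcol[OF k] True by simp
  next
    case False then have tb: "t1 = b" using t1 T1 by auto
    have "(\<Sum>t2\<in>T2. q k (t1, t2) * marg2 T1 lam t2) = (\<Sum>t2\<in>T2. (Q2 k t2 * l2 t2 - p * f t2 k) / (1 - p))"
    proof (intro sum.cong refl)
      fix t assume t: "t \<in> T2"
      have ne: "1 - p \<noteq> 0" using p1' by simp
      show "q k (t1, t) * marg2 T1 lam t = (Q2 k t * l2 t - p * f t k) / (1 - p)"
        unfolding tb qb l2_def[symmetric] using l2ne[OF t] ne
        by (simp add: divide_simps)
    qed
    also have "\<dots> = ((\<Sum>t2\<in>T2. Q2 k t2 * l2 t2) - p * (\<Sum>t2\<in>T2. f t2 k)) / (1 - p)"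
      by (simp add: sum_divide_distrib[symmetric] sum_subtractf sum_distrib_left)
    also have "\<dots> = Q1 k b" using AA[OF k] fcol[OF k] p1' by (simp add: field_simps)
    finally show ?thesis using tb by simp
  qed
  have m2: "Q2 k t = (\<Sum>t1\<in>T1. q k (t1, t) * marg1 T2 lam t1)" if k: "k \<in> K" and t: "t \<in> T2" for k t
  proof -
    have "(\<Sum>t1\<in>T1. q k (t1, t) * marg1 T2 lam t1) = q k (a,t) * p + q k (b,t) * (1 - p)"
      unfolding T1 l1_def[symmetric] using ab p1 p_def by simp
    also have "\<dots> = Q2 k t" using qa qb l2pos[OF t] p1' by (simp add: field_simps)
    finally show ?thesis by simp
  qed
  show ?thesis unfolding implementable_def using feas m1 m2 by blast
qed



lemma swap_sum: "(\<Sum>t\<in>B \<times> A. f (prod.swap t)) = (\<Sum>t\<in>A \<times> B. f t)"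
proof -
  have "(\<Sum>t\<in>prod.swap ` (B \<times> A). f t) = (\<Sum>t\<in>B \<times> A. f (prod.swap t))"
    by (subst sum.reindex) (auto simp: inj_on_def)
  then show ?thesis by (simp add: product_swap)
qed

theorem theorem1:
  fixes K :: "'k set" and k0 :: 'k
    and T1 :: "'a set" and T2 :: "'b set"
    and lam :: "'a \<times> 'b \<Rightarrow> real"
    and Q1 :: "'k \<Rightarrow> 'a \<Rightarrow> real" and Q2 :: "'k \<Rightarrow> 'b \<Rightarrow> real"
  assumes finK: "finite K" and k0K: "k0 \<in> K"
    and finT1: "finite T1" and finT2: "finite T2"
    and min2: "min (card T1) (card T2) = 2"
    and lam_pos: "\<forall>t\<in>T1 \<times> T2. lam t > 0"
    and lam_sum: "(\<Sum>t\<in>T1 \<times> T2. lam t) = 1"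
    and lam_prod: "\<forall>t1\<in>T1. \<forall>t2\<in>T2. lam (t1, t2) = marg1 T2 lam t1 * marg2 T1 lam t2"
    and Q1_sum: "\<forall>t1\<in>T1. (\<Sum>k\<in>K. Q1 k t1) = 1"
    and Q2_sum: "\<forall>t2\<in>T2. (\<Sum>k\<in>K. Q2 k t2) = 1"
  shows "implementable K T1 T2 lam Q1 Q2 \<longleftrightarrow>
    ((\<forall>k\<in>K - {k0}.
        (\<Sum>t1\<in>T1. Q1 k t1 * marg1 T2 lam t1) - (\<Sum>t2\<in>T2. Q2 k t2 * marg2 T1 lam t2) = 0) \<and>
     (\<forall>k\<in>K - {k0}. (\<forall>t1\<in>T1. Q1 k t1 \<ge> 0) \<and> (\<forall>t2\<in>T2. Q2 k t2 \<ge> 0)) \<and>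
     (\<forall>G E1 E2. G \<subseteq> K - {k0} \<longrightarrow> E1 \<subseteq> T1 \<longrightarrow> E2 \<subseteq> T2 \<longrightarrow>
        (\<Sum>k\<in>G. (\<Sum>t1\<in>E1. Q1 k t1 * marg1 T2 lam t1) - (\<Sum>t2\<in>E2. Q2 k t2 * marg2 T1 lam t2))
          \<le> (\<Sum>t\<in>E1 \<times> (T2 - E2). lam t)))"
proof
  assume "implementable K T1 T2 lam Q1 Q2"
  then show "((\<forall>k\<in>K - {k0}.
        (\<Sum>t1\<in>T1. Q1 k t1 * marg1 T2 lam t1) - (\<Sum>t2\<in>T2. Q2 k t2 * marg2 T1 lam t2) = 0) \<and>
     (\<forall>k\<in>K - {k0}. (\<forall>t1\<in>T1. Q1 k t1 \<ge> 0) \<and> (\<forall>t2\<in>T2. Q2 k t2 \<ge> 0)) \<and>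
     (\<forall>G E1 E2. G \<subseteq> K - {k0} \<longrightarrow> E1 \<subseteq> T1 \<longrightarrow> E2 \<subseteq> T2 \<longrightarrow>
        (\<Sum>k\<in>G. (\<Sum>t1\<in>E1. Q1 k t1 * marg1 T2 lam t1) - (\<Sum>t2\<in>E2. Q2 k t2 * marg2 T1 lam t2))
          \<le> (\<Sum>t\<in>E1 \<times> (T2 - E2). lam t)))"
    using necessity[OF finK finT1 finT2 lam_pos lam_prod] by blast
next
  assume H: "((\<forall>k\<in>K - {k0}.
        (\<Sum>t1\<in>T1. Q1 k t1 * marg1 T2 lam t1) - (\<Sum>t2\<in>T2. Q2 k t2 * marg2 T1 lam t2) = 0) \<and>
     (\<forall>k\<in>K - {k0}. (\<forall>t1\<in>T1. Q1 k t1 \<ge> 0) \<and> (\<forall>t2\<in>T2. Q2 k t2 \<ge> 0)) \<and>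
     (\<forall>G E1 E2. G \<subseteq> K - {k0} \<longrightarrow> E1 \<subseteq> T1 \<longrightarrow> E2 \<subseteq> T2 \<longrightarrow>
        (\<Sum>k\<in>G. (\<Sum>t1\<in>E1. Q1 k t1 * marg1 T2 lam t1) - (\<Sum>t2\<in>E2. Q2 k t2 * marg2 T1 lam t2))
          \<le> (\<Sum>t\<in>E1 \<times> (T2 - E2). lam t)))"
  then have A: "\<forall>k\<in>K - {k0}.
        (\<Sum>t1\<in>T1. Q1 k t1 * marg1 T2 lam t1) - (\<Sum>t2\<in>T2. Q2 k t2 * marg2 T1 lam t2) = 0"
    and B: "\<forall>k\<in>K - {k0}. (\<forall>t1\<in>T1. Q1 k t1 \<ge> 0) \<and> (\<forall>t2\<in>T2. Q2 k t2 \<ge> 0)"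
    and C: "\<forall>G E1 E2. G \<subseteq> K - {k0} \<longrightarrow> E1 \<subseteq> T1 \<longrightarrow> E2 \<subseteq> T2 \<longrightarrow>
        (\<Sum>k\<in>G. (\<Sum>t1\<in>E1. Q1 k t1 * marg1 T2 lam t1) - (\<Sum>t2\<in>E2. Q2 k t2 * marg2 T1 lam t2))
          \<le> (\<Sum>t\<in>E1 \<times> (T2 - E2). lam t)"
    by blast+
  have "card T1 = 2 \<or> card T2 = 2" using min2 by (auto simp: min_def split: if_splits)
  then show "implementable K T1 T2 lam Q1 Q2"
  proof
    assume "card T1 = 2"
    then show ?thesis
      using suff[OF finK k0K finT1 finT2 _ lam_pos lam_sum lam_prod Q1_sum Q2_sum A B C] by blast
  next
    assume c2: "card T2 = 2"
    define lam' :: "'b \<times> 'a \<Rightarrow> real" where "lam' t = lam (prod.swap t)" for t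
    have mg1: "marg1 T1 lam' t2 = marg2 T1 lam t2" for t2
      unfolding marg1_def marg2_def lam'_def by simp
    have mg2: "marg2 T2 lam' t1 = marg1 T2 lam t1" for t1
      unfolding marg1_def marg2_def lam'_def by simp
    have ls: "(\<Sum>t\<in>E2 \<times> E1. lam' t) = (\<Sum>t\<in>E1 \<times> E2. lam t)" for E1 E2
      unfolding lam'_def by (rule swap_sum)
    have lam_pos': "\<forall>t\<in>T2 \<times> T1. lam' t > 0" using lam_pos unfolding lam'_def by auto
    have lam_sum': "(\<Sum>t\<in>T2 \<times> T1. lam' t) = 1" using lam_sum ls by simp
    have lam_prod': "\<forall>t1\<in>T2. \<forall>t2\<in>T1. lam' (t1, t2) = marg1 T1 lam' t1 * marg2 T2 lam' t2"
      using lam_prod unfolding mg1 mg2 by (auto simp: lam'_def)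
    have A': "\<forall>k\<in>K - {k0}.
        (\<Sum>t1\<in>T2. Q2 k t1 * marg1 T1 lam' t1) - (\<Sum>t2\<in>T1. Q1 k t2 * marg2 T2 lam' t2) = 0"
      using A unfolding mg1 mg2 by auto
    have B': "\<forall>k\<in>K - {k0}. (\<forall>t1\<in>T2. Q2 k t1 \<ge> 0) \<and> (\<forall>t2\<in>T1. Q1 k t2 \<ge> 0)"
      using B by auto
    have C': "\<forall>G E1 E2. G \<subseteq> K - {k0} \<longrightarrow> E1 \<subseteq> T2 \<longrightarrow> E2 \<subseteq> T1 \<longrightarrow>
        (\<Sum>k\<in>G. (\<Sum>t1\<in>E1. Q2 k t1 * marg1 T1 lam' t1) - (\<Sum>t2\<in>E2. Q1 k t2 * marg2 T2 lam' t2))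
          \<le> (\<Sum>t\<in>E1 \<times> (T1 - E2). lam' t)"
    proof (intro allI impI)
      fix G E1 E2 assume G: "G \<subseteq> K - {k0}" and E1: "E1 \<subseteq> T2" and E2: "E2 \<subseteq> T1"
      have c: "(\<Sum>k\<in>G. (\<Sum>t1\<in>T1 - E2. Q1 k t1 * marg1 T2 lam t1) - (\<Sum>t2\<in>T2 - E1. Q2 k t2 * marg2 T1 lam t2))
          \<le> (\<Sum>t\<in>(T1 - E2) \<times> (T2 - (T2 - E1)). lam t)"
        using C[rule_format, of G "T1 - E2" "T2 - E1"] G by blast
      have e: "T2 - (T2 - E1) = E1" using E1 by auto
      have l: "(\<Sum>k\<in>G. (\<Sum>t1\<in>T1 - E2. Q1 k t1 * marg1 T2 lam t1) - (\<Sum>t2\<in>T2 - E1. Q2 k t2 * marg2 T1 lam t2))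
        = (\<Sum>k\<in>G. (\<Sum>t1\<in>E1. Q2 k t1 * marg1 T1 lam' t1) - (\<Sum>t2\<in>E2. Q1 k t2 * marg2 T2 lam' t2))"
      proof (rule sum.cong[OF refl])
        fix k assume k: "k \<in> G"
        then have "(\<Sum>t1\<in>T1. Q1 k t1 * marg1 T2 lam t1) = (\<Sum>t2\<in>T2. Q2 k t2 * marg2 T1 lam t2)"
          using A G by auto
        then show "(\<Sum>t1\<in>T1 - E2. Q1 k t1 * marg1 T2 lam t1) - (\<Sum>t2\<in>T2 - E1. Q2 k t2 * marg2 T1 lam t2)
           = (\<Sum>t1\<in>E1. Q2 k t1 * marg1 T1 lam' t1) - (\<Sum>t2\<in>E2. Q1 k t2 * marg2 T2 lam' t2)"
          unfolding mg1 mg2 by (simp add: sum_diff[OF finT1 E2] sum_diff[OF finT2 E1])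
      qed
      show "(\<Sum>k\<in>G. (\<Sum>t1\<in>E1. Q2 k t1 * marg1 T1 lam' t1) - (\<Sum>t2\<in>E2. Q1 k t2 * marg2 T2 lam' t2))
          \<le> (\<Sum>t\<in>E1 \<times> (T1 - E2). lam' t)"
        using c unfolding l e ls .
    qed
    have "implementable K T2 T1 lam' Q2 Q1"
      using suff[OF finK k0K finT2 finT1 c2 lam_pos' lam_sum' lam_prod' Q2_sum Q1_sum A' B' C'] .
    then obtain q where feas: "feasible_ex_post K T2 T1 q"
      and m1: "\<forall>k\<in>K. \<forall>t1\<in>T2. Q2 k t1 = (\<Sum>t2\<in>T1. q k (t1, t2) * marg2 T2 lam' t2)"
      and m2: "\<forall>k\<in>K. \<forall>t2\<in>T1. Q1 k t2 = (\<Sum>t1\<in>T2. q k (t1, t2) * marg1 T1 lam' t1)"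
      unfolding implementable_def by blast
    define q' where "q' k t = q k (prod.swap t)" for k t
    have "feasible_ex_post K T1 T2 q'"
      using feas unfolding feasible_ex_post_def q'_def by auto
    moreover have "\<forall>k\<in>K. \<forall>t1\<in>T1. Q1 k t1 = (\<Sum>t2\<in>T2. q' k (t1, t2) * marg2 T1 lam t2)"
      using m2 unfolding mg1 q'_def by simp
    moreover have "\<forall>k\<in>K. \<forall>t2\<in>T2. Q2 k t2 = (\<Sum>t1\<in>T1. q' k (t1, t2) * marg1 T2 lam t1)"
      using m1 unfolding mg2 q'_def by simp
    ultimately show ?thesis unfolding implementable_def by blast
  qed
qed

end
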